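(* For each finite set $I$, the linear map $\mathcal T:\mathbf{GP}[I]\to\mathcal R$ defined on generalized permutahedra $P\subseteq\mathbb R^I$ by $$\mathcal T(P)=\sum_{A\subseteq I}x_1^{|A|}\,y_1^{\mu_P(A)}\,x_2^{|I\setminus A|}\,y_2^{\mu_P(I)-\mu_P(A)}$$ (the universal Tutte character of $\mathbf{GP}$) is a strong valuation.
   Context: $\mathbf{GP}[I]$ is the real vector space with basis the generalized permutahedra in $\mathbb R^I$, i.e. polytopes $\{x:\sum_{i\in I}x_i=z(I),\ \sum_{i\in A}x_i\le z(A)\ \forall A\subseteq I\}$ for submodular $z:2^I\to\mathbb R$. For such $P$, $\mu_P(A)=\max_{x\in P}\sum_{i\in A}x_i$ (so $\mu_P(\emptyset)=0$). $\mathcal R$ is the real group algebra of monomials $x_1^ax_2^by_1^cy_2^d$ with $a,b\in\mathbb Z_{\ge0}$, $c,d\in\mathbb R$. A linear map $f:\mathbf{GP}[I]\to\mathcal R$ is a strong valuation if there is a linear map $\hat f$ on the span of the indicator functions $\mathbb 1_P$ of generalized permutahedra $P\subseteq\mathbb R^I$ with $f(P)=\hat f(\mathbb 1_P)$ for all $P$. *)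

theory Defs
  imports "HOL-Analysis.Analysis"
begin

text \<open>Points of R^I are functions 'i \<Rightarrow> real, where the finite ground set I is the
  universe of a finite type 'i.\<close>

definition submodular :: "('i set \<Rightarrow> real) \<Rightarrow> bool" where
  "submodular z \<longleftrightarrow> (\<forall>A B. z (A \<union> B) + z (A \<inter> B) \<le> z A + z B)"

definition gen_perm_of :: "('i::finite set \<Rightarrow> real) \<Rightarrow> ('i \<Rightarrow> real) set" where
  "gen_perm_of z = {x. sum x UNIV = z UNIV \<and> (\<forall>A. sum x A \<le> z A)}"

definition is_gen_perm :: "('i::finite \<Rightarrow> real) set \<Rightarrow> bool" where
  "is_gen_perm P \<longleftrightarrow> (\<exists>z. submodular z \<and> z {} = 0 \<and> P = gen_perm_of z)"

definition mu :: "('i::finite \<Rightarrow> real) set \<Rightarrow> 'i set \<Rightarrow> real" where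
  "mu P A = (SUP x\<in>P. sum x A)"

text \<open>The group algebra R: elements are finitely supported real functions on exponent
  vectors (a,b,c,d) (monomial x1^a x2^b y1^c y2^d), with pointwise vector operations.\<close>
type_synonym monom = "nat \<times> nat \<times> real \<times> real"
type_synonym Ralg = "monom \<Rightarrow> real"

definition R_monomial :: "nat \<Rightarrow> nat \<Rightarrow> real \<Rightarrow> real \<Rightarrow> Ralg" where
  "R_monomial a b c d = (\<lambda>m. if m = (a, b, c, d) then 1 else 0)"

definition tutte_char :: "('i::finite \<Rightarrow> real) set \<Rightarrow> Ralg" where
  "tutte_char P = (\<lambda>m. \<Sum>A\<in>(UNIV :: 'i set set).
      R_monomial (card A) (card (UNIV - A)) (mu P A) (mu P UNIV - mu P A) m)"

definition gp_indicator_span :: "(('i::finite \<Rightarrow> real) \<Rightarrow> real) set" where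
  "gp_indicator_span = {h. \<exists>(K::nat set) c Q. finite K \<and> (\<forall>k\<in>K. is_gen_perm (Q k)) \<and>
      h = (\<lambda>x. \<Sum>k\<in>K. c k * indicator (Q k) x)}"

definition linear_on_span :: "((('i::finite \<Rightarrow> real) \<Rightarrow> real) \<Rightarrow> Ralg) \<Rightarrow> bool" where
  "linear_on_span g \<longleftrightarrow>
     (\<forall>u\<in>gp_indicator_span. \<forall>v\<in>gp_indicator_span.
         g (\<lambda>x. u x + v x) = (\<lambda>m. g u m + g v m)) \<and>
     (\<forall>c. \<forall>u\<in>gp_indicator_span. g (\<lambda>x. c * u x) = (\<lambda>m. c * g u m))"

text \<open>A linear map on GP[I] is determined by its values on the basis (the generalized
  permutahedra), so it is given as a function on these sets.\<close>
definition strong_valuation :: "(('i::finite \<Rightarrow> real) set \<Rightarrow> Ralg) \<Rightarrow> bool" where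
  "strong_valuation f \<longleftrightarrow>
     (\<exists>g. linear_on_span g \<and> (\<forall>P. is_gen_perm P \<longrightarrow> f P = g (indicator P)))"

end

theory Submission
  imports Defs
begin


lemma interval_lim:
  fixes S :: "real set"
  assumes cS: "compact S" and iS: "\<And>a b t. a \<in> S \<Longrightarrow> b \<in> S \<Longrightarrow> a \<le> t \<Longrightarrow> t \<le> b \<Longrightarrow> t \<in> S"
  shows "\<exists>L. ((\<lambda>s. indicator S s :: real) \<longlongrightarrow> L) (at_right t) \<and>
     indicator S t - L = (if S \<noteq> {} \<and> t = Sup S then 1 else 0)"
proof (cases "S = {}")
  case True
  have "((\<lambda>s. indicator S s :: real) \<longlongrightarrow> 0) (at_right t)" using True by simp
  then show ?thesis using True by (intro exI[of _ 0]) simp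
next
  case False
  have cl: "closed S" using cS by (rule compact_imp_closed)
  have bd: "bounded S" using cS by (rule compact_imp_bounded)
  have bb: "bdd_below S" using bd by (rule bounded_imp_bdd_below)
  have ba: "bdd_above S" using bd by (rule bounded_imp_bdd_above)
  define a where "a = Inf S"
  define b where "b = Sup S"
  have aS: "a \<in> S" unfolding a_def by (rule closed_contains_Inf[OF False bb cl])
  have bS: "b \<in> S" unfolding b_def by (rule closed_contains_Sup[OF False ba cl])
  have Seq: "S = {a..b}"
  proof
    show "S \<subseteq> {a..b}"
    proof
      fix s assume s: "s \<in> S"
      have "a \<le> s" unfolding a_def by (rule cInf_lower[OF s bb])
      moreover have "s \<le> b" unfolding b_def by (rule cSup_upper[OF s ba])
      ultimately show "s \<in> {a..b}" by simp
    qed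
    show "{a..b} \<subseteq> S"
    proof
      fix s assume "s \<in> {a..b}"
      then show "s \<in> S" using iS[OF aS bS] by simp
    qed
  qed
  have ab: "a \<le> b" using aS Seq by simp
  have ind: "indicator S s = (if a \<le> s \<and> s \<le> b then 1 else 0 :: real)" for s
    by (simp add: Seq indicator_def)
  show ?thesis
  proof (cases "t < a")
    case True
    have "eventually (\<lambda>s. s \<in> {t<..<a}) (at_right t)" by (rule eventually_at_right_real[OF True])
    then have "eventually (\<lambda>s. indicator S s = (0::real)) (at_right t)"
      by (rule eventually_mono) (simp add: ind)
    then have "((\<lambda>s. indicator S s :: real) \<longlongrightarrow> 0) (at_right t)" by (rule tendsto_eventually)
    moreover have "indicator S t - 0 = (if S \<noteq> {} \<and> t = Sup S then 1 else 0 :: real)"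
      using True ab by (simp add: ind b_def[symmetric])
    ultimately show ?thesis by blast
  next
    case ta: False
    show ?thesis
    proof (cases "t < b")
      case True
      have "eventually (\<lambda>s. s \<in> {t<..<b}) (at_right t)" by (rule eventually_at_right_real[OF True])
      then have "eventually (\<lambda>s. indicator S s = (1::real)) (at_right t)"
        by (rule eventually_mono) (use ta in \<open>simp add: ind\<close>)
      then have "((\<lambda>s. indicator S s :: real) \<longlongrightarrow> 1) (at_right t)" by (rule tendsto_eventually)
      moreover have "indicator S t - 1 = (if S \<noteq> {} \<and> t = Sup S then 1 else 0 :: real)"
        using True ta by (simp add: ind b_def[symmetric])
      ultimately show ?thesis by blast
    next
      case tb: False
      have "eventually (\<lambda>s. t < s) (at_right t)" by (rule eventually_at_right_less)
      then have "eventually (\<lambda>s. indicator S s = (0::real)) (at_right t)"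
        by (rule eventually_mono) (use tb in \<open>simp add: ind\<close>)
      then have "((\<lambda>s. indicator S s :: real) \<longlongrightarrow> 0) (at_right t)" by (rule tendsto_eventually)
      moreover have "indicator S t - 0 = (if S \<noteq> {} \<and> t = Sup S then 1 else 0 :: real)"
        using tb ta False by (auto simp add: ind b_def[symmetric])
      ultimately show ?thesis by blast
    qed
  qed
qed

lemma downset_lim:
  fixes M c :: real
  shows "((\<lambda>s. if s \<le> M then 1 else 0 :: real) \<longlongrightarrow> (if c < M then 1 else 0)) (at_right c)"
proof (cases "c < M")
  case True
  have "eventually (\<lambda>s. s \<in> {c<..<M}) (at_right c)" by (rule eventually_at_right_real[OF True])
  then have "eventually (\<lambda>s. (if s \<le> M then 1 else 0 :: real) = 1) (at_right c)"
    by (rule eventually_mono) auto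
  then have "((\<lambda>s. if s \<le> M then 1 else 0 :: real) \<longlongrightarrow> 1) (at_right c)" by (rule tendsto_eventually)
  then show ?thesis using True by simp
next
  case False
  have "eventually (\<lambda>s. c < s) (at_right c)" by (rule eventually_at_right_less)
  then have "eventually (\<lambda>s. (if s \<le> M then 1 else 0 :: real) = 0) (at_right c)"
    by (rule eventually_mono) (use False in auto)
  then have "((\<lambda>s. if s \<le> M then 1 else 0 :: real) \<longlongrightarrow> 0) (at_right c)" by (rule tendsto_eventually)
  then show ?thesis using False by simp
qed

lemma sum_support:
  assumes "finite K"
  shows "(\<Sum>t\<in>{t. (\<Sum>k\<in>K. c k * (if P k \<and> t = m k then 1 else 0)) \<noteq> (0::real)}.
           \<Sum>k\<in>K. c k * (if P k \<and> t = m k then 1 else 0)) = (\<Sum>k\<in>K. c k * (if P k then 1 else 0))"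
proof -
  let ?D = "\<lambda>t. \<Sum>k\<in>K. c k * (if P k \<and> t = m k then 1 else 0 :: real)"
  have sub: "{t. ?D t \<noteq> 0} \<subseteq> m ` K"
  proof
    fix t assume t: "t \<in> {t. ?D t \<noteq> 0}"
    show "t \<in> m ` K"
    proof (rule ccontr)
      assume "t \<notin> m ` K"
      then have "\<forall>k\<in>K. t \<noteq> m k" by blast
      then have "?D t = 0" by (intro sum.neutral) simp
      then show False using t by simp
    qed
  qed
  have "sum ?D {t. ?D t \<noteq> 0} = sum ?D (m ` K)"
    by (rule sum.mono_neutral_left) (use sub assms in auto)
  also have "\<dots> = (\<Sum>k\<in>K. c k * (\<Sum>t\<in>m ` K. if P k \<and> t = m k then 1 else 0))"
    by (subst sum.swap) (simp add: sum_distrib_left)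
  also have "\<dots> = (\<Sum>k\<in>K. c k * (if P k then 1 else 0))"
  proof (rule sum.cong[OF refl])
    fix k assume k: "k \<in> K"
    have "(\<Sum>t\<in>m ` K. if P k \<and> t = m k then 1 else 0 :: real) = (if P k then 1 else 0)"
    proof (cases "P k")
      case True
      then have "(\<Sum>t\<in>m ` K. if P k \<and> t = m k then 1 else 0 :: real) = (\<Sum>t\<in>m ` K. if t = m k then 1 else 0)"
        by simp
      also have "\<dots> = 1" using k assms by (simp add: sum.delta')
      finally show ?thesis using True by simp
    next
      case False then show ?thesis by simp
    qed
    then show "c k * (\<Sum>t\<in>m ` K. if P k \<and> t = m k then 1 else 0) = c k * (if P k then 1 else 0)" by simp
  qed
  finally show ?thesis .
qed



definition pconvex :: "('i \<Rightarrow> real) set \<Rightarrow> bool" where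
  "pconvex Q \<longleftrightarrow> (\<forall>y1\<in>Q. \<forall>y2\<in>Q. \<forall>u::real. 0 \<le> u \<and> u \<le> 1 \<longrightarrow> (\<lambda>j. (1-u) * y1 j + u * y2 j) \<in> Q)"

fun E :: "'i list \<Rightarrow> (('i \<Rightarrow> real) \<Rightarrow> real) \<Rightarrow> ('i \<Rightarrow> real) \<Rightarrow> real" where
  "E [] h x = h x"
| "E (i # js) h x = (\<Sum>t \<in> {t. E js h (x(i:=t)) - Lim (at_right t) (\<lambda>s. E js h (x(i:=s))) \<noteq> 0}.
       E js h (x(i:=t)) - Lim (at_right t) (\<lambda>s. E js h (x(i:=s))))"

lemma closed_agree: "closed {y :: 'i \<Rightarrow> real. \<forall>j. j \<notin> F \<longrightarrow> y j = x j}"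
proof (rule closed_Collect_all)
  fix j
  show "closed {y :: 'i \<Rightarrow> real. j \<notin> F \<longrightarrow> y j = x j}"
  proof (cases "j \<in> F")
    case True then show ?thesis by simp
  next
    case False then show ?thesis
      by (simp add: closed_Collect_eq continuous_on_product_coordinates continuous_on_const)
  qed
qed

lemma slice_interval:
  fixes Q :: "('i \<Rightarrow> real) set" and i :: 'i and F :: "'i set" and x :: "'i \<Rightarrow> real"
  assumes cQ: "compact Q" and pQ: "pconvex Q"
  defines "S \<equiv> {t. \<exists>y\<in>Q. y i = t \<and> (\<forall>j. j \<notin> F \<longrightarrow> y j = x j)}"
  shows "compact S" "\<And>a b t. a \<in> S \<Longrightarrow> b \<in> S \<Longrightarrow> a \<le> t \<Longrightarrow> t \<le> b \<Longrightarrow> t \<in> S"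
proof -
  have "S = (\<lambda>y. y i) ` (Q \<inter> {y. \<forall>j. j \<notin> F \<longrightarrow> y j = x j})" unfolding S_def by auto
  moreover have "compact (Q \<inter> {y. \<forall>j. j \<notin> F \<longrightarrow> y j = x j})"
    using cQ closed_agree by (rule compact_Int_closed)
  ultimately show "compact S"
    by (simp add: compact_continuous_image[OF continuous_on_subset[OF continuous_on_product_coordinates subset_UNIV]])
next
  fix a b t assume a: "a \<in> S" and b: "b \<in> S" and ab: "a \<le> t" "t \<le> b"
  obtain ya where ya: "ya \<in> Q" "ya i = a" "\<forall>j. j \<notin> F \<longrightarrow> ya j = x j" using a unfolding S_def by auto
  obtain yb where yb: "yb \<in> Q" "yb i = b" "\<forall>j. j \<notin> F \<longrightarrow> yb j = x j" using b unfolding S_def by auto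
  show "t \<in> S"
  proof (cases "a = b")
    case True then show ?thesis using a ab by auto
  next
    case False
    then have ab': "a < b" using ab by auto
    define u where "u = (t - a) / (b - a)"
    have u: "0 \<le> u" "u \<le> 1" using ab ab' unfolding u_def by (auto simp: field_simps)
    define y where "y = (\<lambda>j. (1-u) * ya j + u * yb j)"
    have "u * (b - a) = t - a" using ab' by (simp add: u_def)
    moreover have "y i = a + u * (b - a)" by (simp add: y_def ya yb algebra_simps)
    ultimately have yi: "y i = t" by simp
    have "y \<in> Q" using pQ ya(1) yb(1) u unfolding pconvex_def y_def by blast
    moreover note yi
    moreover have "\<forall>j. j \<notin> F \<longrightarrow> y j = x j" using ya yb unfolding y_def by (auto simp: algebra_simps)
    ultimately show ?thesis unfolding S_def by blast
  qed
qed

lemma E_rep: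
  fixes Q :: "'k \<Rightarrow> ('i \<Rightarrow> real) set"
  assumes "distinct xs" "finite K" "\<And>k. k \<in> K \<Longrightarrow> compact (Q k) \<and> pconvex (Q k)"
  shows "E xs (\<lambda>y. \<Sum>k\<in>K. c k * indicator (Q k) y) x =
     (\<Sum>k\<in>K. c k * (if (\<exists>y\<in>Q k. \<forall>j. j \<notin> set xs \<longrightarrow> y j = x j) then 1 else 0))"
  using assms(1)
proof (induction xs arbitrary: x)
  case Nil
  have "\<And>k. (\<exists>y\<in>Q k. \<forall>j. y j = x j) = (x \<in> Q k)" by (metis ext)
  then show ?case by (auto simp: indicator_def intro!: sum.cong)
next
  case (Cons i js)
  let ?h = "\<lambda>y. \<Sum>k\<in>K. c k * indicator (Q k) y"
  define S where "S k = {t. \<exists>y\<in>Q k. y i = t \<and> (\<forall>j. j \<notin> set (i # js) \<longrightarrow> y j = x j)}" for k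
  have inot: "i \<notin> set js" using Cons by auto
  have F: "E js ?h (x(i:=t)) = (\<Sum>k\<in>K. c k * indicator (S k) t)" for t
  proof -
    have "E js ?h (x(i:=t)) = (\<Sum>k\<in>K. c k * (if (\<exists>y\<in>Q k. \<forall>j. j \<notin> set js \<longrightarrow> y j = (x(i:=t)) j) then 1 else 0))"
      using Cons by auto
    also have "\<dots> = (\<Sum>k\<in>K. c k * indicator (S k) t)"
    proof (rule sum.cong[OF refl])
      fix k
      have "(\<exists>y\<in>Q k. \<forall>j. j \<notin> set js \<longrightarrow> y j = (x(i:=t)) j) = (t \<in> S k)"
      proof -
        have pw: "(\<forall>j. j \<notin> set js \<longrightarrow> y j = (x(i:=t)) j) \<longleftrightarrow> (y i = t \<and> (\<forall>j. j \<notin> set (i#js) \<longrightarrow> y j = x j))" for y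
        proof
          assume H: "\<forall>j. j \<notin> set js \<longrightarrow> y j = (x(i:=t)) j"
          have "y i = t" using H inot by simp
          moreover have "\<forall>j. j \<notin> set (i#js) \<longrightarrow> y j = x j"
          proof (intro allI impI)
            fix j assume "j \<notin> set (i#js)"
            then have "j \<noteq> i" "j \<notin> set js" by auto
            then show "y j = x j" using H by simp
          qed
          ultimately show "y i = t \<and> (\<forall>j. j \<notin> set (i#js) \<longrightarrow> y j = x j)" ..
        next
          assume H: "y i = t \<and> (\<forall>j. j \<notin> set (i#js) \<longrightarrow> y j = x j)"
          show "\<forall>j. j \<notin> set js \<longrightarrow> y j = (x(i:=t)) j"
          proof (intro allI impI)
            fix j assume j: "j \<notin> set js"
            show "y j = (x(i:=t)) j"
            proof (cases "j = i")
              case True then show ?thesis using H by simp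
            next
              case False then show ?thesis using H j by simp
            qed
          qed
        qed
        show ?thesis unfolding S_def by (simp only: pw mem_Collect_eq)
      qed
      then show "c k * (if (\<exists>y\<in>Q k. \<forall>j. j \<notin> set js \<longrightarrow> y j = (x(i:=t)) j) then 1 else 0) = c k * indicator (S k) t"
        by (simp add: indicator_def)
    qed
    finally show ?thesis .
  qed
  have ex: "\<forall>k\<in>K. \<exists>L. ((\<lambda>s. indicator (S k) s :: real) \<longlongrightarrow> L) (at_right t) \<and>
     indicator (S k) t - L = (if S k \<noteq> {} \<and> t = Sup (S k) then 1 else 0)" for t
  proof
    fix k assume k: "k \<in> K"
    show "\<exists>L. ((\<lambda>s. indicator (S k) s :: real) \<longlongrightarrow> L) (at_right t) \<and>
     indicator (S k) t - L = (if S k \<noteq> {} \<and> t = Sup (S k) then 1 else 0)"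
    proof -
      note si1 = slice_interval(1)[where Q="Q k" and i=i and F="set (i # js)" and x=x,
         OF conjunct1[OF assms(3)[OF k]] conjunct2[OF assms(3)[OF k]], folded S_def]
      note si2 = slice_interval(2)[where Q="Q k" and i=i and F="set (i # js)" and x=x,
         OF conjunct1[OF assms(3)[OF k]] conjunct2[OF assms(3)[OF k]], folded S_def]
      show ?thesis by (rule interval_lim) (rule si1, rule si2)
    qed
  qed
  have D: "E js ?h (x(i:=t)) - Lim (at_right t) (\<lambda>s. E js ?h (x(i:=s))) =
      (\<Sum>k\<in>K. c k * (if S k \<noteq> {} \<and> t = Sup (S k) then 1 else 0))" for t
  proof -
    from bchoice[OF ex[of t]] obtain L where L: "\<forall>k\<in>K. ((\<lambda>s. indicator (S k) s :: real) \<longlongrightarrow> L k) (at_right t) \<and>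
     indicator (S k) t - L k = (if S k \<noteq> {} \<and> t = Sup (S k) then 1 else 0)" by blast
    have "((\<lambda>s. E js ?h (x(i:=s))) \<longlongrightarrow> (\<Sum>k\<in>K. c k * L k)) (at_right t)"
      unfolding F by (intro tendsto_sum tendsto_mult tendsto_const) (use L in auto)
    then have "Lim (at_right t) (\<lambda>s. E js ?h (x(i:=s))) = (\<Sum>k\<in>K. c k * L k)"
      by (intro tendsto_Lim) auto
    then have "E js ?h (x(i:=t)) - Lim (at_right t) (\<lambda>s. E js ?h (x(i:=s))) =
       (\<Sum>k\<in>K. c k * (indicator (S k) t - L k))"
      unfolding F by (simp add: sum_subtractf right_diff_distrib)
    also have "\<dots> = (\<Sum>k\<in>K. c k * (if S k \<noteq> {} \<and> t = Sup (S k) then 1 else 0))"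
      using L by (intro sum.cong) auto
    finally show ?thesis .
  qed
  have "E (i # js) ?h x = (\<Sum>t\<in>{t. (\<Sum>k\<in>K. c k * (if S k \<noteq> {} \<and> t = Sup (S k) then 1 else 0)) \<noteq> 0}.
           \<Sum>k\<in>K. c k * (if S k \<noteq> {} \<and> t = Sup (S k) then 1 else 0))"
    by (simp only: E.simps D)
  also have "\<dots> = (\<Sum>k\<in>K. c k * (if S k \<noteq> {} then 1 else 0))"
    by (rule sum_support[OF assms(2)])
  also have "\<dots> = (\<Sum>k\<in>K. c k * (if (\<exists>y\<in>Q k. \<forall>j. j \<notin> set (i # js) \<longrightarrow> y j = x j) then 1 else 0))"
  proof (rule sum.cong[OF refl])
    fix k
    have "(S k \<noteq> {}) = (\<exists>y\<in>Q k. \<forall>j. j \<notin> set (i # js) \<longrightarrow> y j = x j)" unfolding S_def by blast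
    then show "c k * (if S k \<noteq> {} then 1 else 0) = c k * (if (\<exists>y\<in>Q k. \<forall>j. j \<notin> set (i # js) \<longrightarrow> y j = x j) then 1 else 0)"
      by simp
  qed
  finally show ?case .
qed



definition xs0 :: "'i::finite list" where
  "xs0 = (SOME xs. distinct xs \<and> set xs = UNIV)"

lemma xs0: "distinct (xs0 :: 'i::finite list)" "set (xs0 :: 'i list) = UNIV"
proof -
  have "\<exists>xs :: 'i list. distinct xs \<and> set xs = UNIV"
    using finite_distinct_list[of "UNIV :: 'i set"] by auto
  then have "distinct (xs0 :: 'i list) \<and> set (xs0 :: 'i list) = UNIV"
    unfolding xs0_def by (rule someI_ex)
  then show "distinct (xs0 :: 'i::finite list)" "set (xs0 :: 'i list) = UNIV" by auto
qed

definition chi :: "(('i::finite \<Rightarrow> real) \<Rightarrow> real) \<Rightarrow> real" where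
  "chi h = E xs0 h (\<lambda>_. 0)"

lemma chi_rep:
  fixes Q :: "'k \<Rightarrow> ('i::finite \<Rightarrow> real) set"
  assumes "finite K" "\<And>k. k \<in> K \<Longrightarrow> compact (Q k) \<and> pconvex (Q k)"
  shows "chi (\<lambda>y. \<Sum>k\<in>K. c k * indicator (Q k) y) = (\<Sum>k\<in>K. c k * (if Q k \<noteq> {} then 1 else 0))"
proof -
  have "E xs0 (\<lambda>y. \<Sum>k\<in>K. c k * indicator (Q k) y) (\<lambda>_. 0) =
     (\<Sum>k\<in>K. c k * (if (\<exists>y\<in>Q k. \<forall>j. j \<notin> set xs0 \<longrightarrow> y j = 0) then 1 else 0))"
    by (rule E_rep[OF xs0(1) assms(1) assms(2)])
  also have "\<dots> = (\<Sum>k\<in>K. c k * (if Q k \<noteq> {} then 1 else 0))"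
    by (intro sum.cong refl) (auto simp: xs0(2))
  finally show ?thesis unfolding chi_def .
qed

definition H :: "'i::finite set \<Rightarrow> real \<Rightarrow> real \<Rightarrow> ('i \<Rightarrow> real) set" where
  "H A s e = {y. s \<le> sum y A \<and> sum y UNIV = e}"

lemma cont_sum: "continuous_on UNIV (\<lambda>y::'i::finite \<Rightarrow> real. sum y A)"
  by (intro continuous_on_sum continuous_on_product_coordinates)

lemma H_closed: "closed (H A s e)"
proof -
  have "H A s e = {y. s \<le> sum y A} \<inter> {y. sum y UNIV = e}" unfolding H_def by auto
  also have "closed \<dots>"
    by (intro closed_Int closed_Collect_le closed_Collect_eq cont_sum continuous_on_const)
  finally show ?thesis .
qed

lemma pconvex_sum:
  fixes y1 y2 :: "'i \<Rightarrow> real"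
  shows "sum (\<lambda>j. (1-u) * y1 j + u * y2 j) A = (1-u) * sum y1 A + u * sum y2 A"
  by (simp add: sum.distrib sum_distrib_left)

lemma H_pconvex:
  fixes A :: "'i::finite set"
  shows "pconvex (H A s e)"
  unfolding pconvex_def H_def
proof (intro ballI allI impI)
  fix y1 y2 :: "'i \<Rightarrow> real" and u :: real
  assume y1: "y1 \<in> {y. s \<le> sum y A \<and> sum y UNIV = e}" and y2: "y2 \<in> {y. s \<le> sum y A \<and> sum y UNIV = e}"
    and u: "0 \<le> u \<and> u \<le> 1"
  have "(1-u) * s + u * s \<le> (1-u) * sum y1 A + u * sum y2 A"
    using y1 y2 u by (intro add_mono mult_left_mono) auto
  moreover have "(1-u) * sum y1 UNIV + u * sum y2 UNIV = e" using y1 y2 by (simp add: algebra_simps)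
  moreover have "(1-u) * s + u * s = s" by (simp add: algebra_simps)
  moreover have e1: "sum (\<lambda>j. (1-u) * y1 j + u * y2 j) A = (1-u) * sum y1 A + u * sum y2 A" by (rule pconvex_sum)
  moreover have e2: "sum (\<lambda>j. (1-u) * y1 j + u * y2 j) UNIV = (1-u) * sum y1 UNIV + u * sum y2 UNIV" by (rule pconvex_sum)
  ultimately show "(\<lambda>j. (1-u) * y1 j + u * y2 j) \<in> {y. s \<le> sum y A \<and> sum y UNIV = e}"
    unfolding mem_Collect_eq by linarith
qed

lemma pconvex_Int: "pconvex P \<Longrightarrow> pconvex Q \<Longrightarrow> pconvex (P \<inter> Q)"
  unfolding pconvex_def by blast

definition G :: "('i::finite \<Rightarrow> real) set \<Rightarrow> real \<Rightarrow> ('i \<Rightarrow> real) set" where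
  "G Q e = {y\<in>Q. sum y UNIV = e}"

definition Mx :: "('i::finite \<Rightarrow> real) set \<Rightarrow> 'i set \<Rightarrow> real \<Rightarrow> real" where
  "Mx Q A e = Sup ((\<lambda>y. sum y A) ` G Q e)"

lemma H_nonempty:
  fixes Q :: "('i::finite \<Rightarrow> real) set"
  assumes "compact Q"
  shows "(Q \<inter> H A s e \<noteq> {}) = (G Q e \<noteq> {} \<and> s \<le> Mx Q A e)"
proof -
  have cG: "compact (G Q e)"
  proof -
    have "G Q e = Q \<inter> {y. sum y UNIV = e}" unfolding G_def by auto
    then show ?thesis using assms
      by (simp add: compact_Int_closed closed_Collect_eq cont_sum continuous_on_const)
  qed
  have cI: "compact ((\<lambda>y. sum y A) ` G Q e)"
    by (rule compact_continuous_image[OF continuous_on_subset[OF cont_sum subset_UNIV] cG])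
  show ?thesis
  proof (cases "G Q e = {}")
    case True
    then show ?thesis unfolding G_def H_def by auto
  next
    case False
    have bd: "bdd_above ((\<lambda>y. sum y A) ` G Q e)" by (rule bounded_imp_bdd_above[OF compact_imp_bounded[OF cI]])
    have "Mx Q A e \<in> (\<lambda>y. sum y A) ` G Q e" unfolding Mx_def
      using closed_contains_Sup[OF _ bd] cI compact_imp_closed False by blast
    then obtain y0 where y0: "y0 \<in> G Q e" "sum y0 A = Mx Q A e" by auto
    have le: "\<And>y. y \<in> G Q e \<Longrightarrow> sum y A \<le> Mx Q A e" unfolding Mx_def using bd by (auto intro: cSup_upper)
    show ?thesis
    proof
      assume "Q \<inter> H A s e \<noteq> {}"
      then obtain y where "y \<in> Q" "y \<in> H A s e" by auto
      then have "y \<in> G Q e" "s \<le> sum y A" unfolding G_def H_def by auto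
      then show "G Q e \<noteq> {} \<and> s \<le> Mx Q A e" using le[of y] by auto
    next
      assume "G Q e \<noteq> {} \<and> s \<le> Mx Q A e"
      then have "y0 \<in> Q \<inter> H A s e" using y0 unfolding G_def H_def by auto
      then show "Q \<inter> H A s e \<noteq> {}" by auto
    qed
  qed
qed

definition g :: "(('i::finite \<Rightarrow> real) \<Rightarrow> real) \<Rightarrow> Ralg" where
  "g h = (\<lambda>(a, b, c, d). \<Sum>A\<in>UNIV. if card A = a \<and> card (UNIV - A) = b then
      chi (\<lambda>y. h y * indicator (H A c (c + d)) y) -
      Lim (at_right c) (\<lambda>s. chi (\<lambda>y. h y * indicator (H A s (c + d)) y)) else 0)"

definition TT :: "('i::finite \<Rightarrow> real) set \<Rightarrow> Ralg" where
  "TT Q = (\<lambda>(a, b, c, d). \<Sum>A\<in>UNIV. if card A = a \<and> card (UNIV - A) = b \<and>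
      G Q (c + d) \<noteq> {} \<and> c = Mx Q A (c + d) then 1 else 0)"

lemma g_rep:
  fixes Q :: "'k \<Rightarrow> ('i::finite \<Rightarrow> real) set"
  assumes fK: "finite K" and QK: "\<And>k. k \<in> K \<Longrightarrow> compact (Q k) \<and> pconvex (Q k)"
  shows "g (\<lambda>y. \<Sum>k\<in>K. c k * indicator (Q k) y) = (\<lambda>m. \<Sum>k\<in>K. c k * TT (Q k) m)"
proof
  fix m :: monom
  obtain a b cc d where m: "m = (a, b, cc, d)" by (cases m) auto
  have ch: "chi (\<lambda>y. (\<Sum>k\<in>K. c k * indicator (Q k) y) * indicator (H A s e) y) =
     (\<Sum>k\<in>K. c k * (if G (Q k) e \<noteq> {} \<and> s \<le> Mx (Q k) A e then 1 else 0))" for A s e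
  proof -
    have "(\<lambda>y. (\<Sum>k\<in>K. c k * indicator (Q k) y) * indicator (H A s e) y) =
        (\<lambda>y. \<Sum>k\<in>K. c k * indicator (Q k \<inter> H A s e) y)"
      by (auto simp: sum_distrib_right indicator_inter_arith mult.assoc)
    then have "chi (\<lambda>y. (\<Sum>k\<in>K. c k * indicator (Q k) y) * indicator (H A s e) y) =
        (\<Sum>k\<in>K. c k * (if Q k \<inter> H A s e \<noteq> {} then 1 else 0))"
      using chi_rep[OF fK, of "\<lambda>k. Q k \<inter> H A s e" c] QK
      by (simp add: compact_Int_closed H_closed pconvex_Int H_pconvex)
    also have "\<dots> = (\<Sum>k\<in>K. c k * (if G (Q k) e \<noteq> {} \<and> s \<le> Mx (Q k) A e then 1 else 0))"
    proof (rule sum.cong[OF refl])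
      fix k assume k: "k \<in> K"
      have "(Q k \<inter> H A s e \<noteq> {}) = (G (Q k) e \<noteq> {} \<and> s \<le> Mx (Q k) A e)"
        by (rule H_nonempty) (use QK[OF k] in blast)
      then show "c k * (if Q k \<inter> H A s e \<noteq> {} then 1 else 0) = c k * (if G (Q k) e \<noteq> {} \<and> s \<le> Mx (Q k) A e then 1 else 0)"
        by simp
    qed
    finally show ?thesis .
  qed
  have trm: "chi (\<lambda>y. (\<Sum>k\<in>K. c k * indicator (Q k) y) * indicator (H A cc e) y) -
      Lim (at_right cc) (\<lambda>s. chi (\<lambda>y. (\<Sum>k\<in>K. c k * indicator (Q k) y) * indicator (H A s e) y)) =
      (\<Sum>k\<in>K. c k * (if G (Q k) e \<noteq> {} \<and> cc = Mx (Q k) A e then 1 else 0))" for A e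
  proof -
    have lim: "((\<lambda>s. chi (\<lambda>y. (\<Sum>k\<in>K. c k * indicator (Q k) y) * indicator (H A s e) y)) \<longlongrightarrow>
        (\<Sum>k\<in>K. c k * (if G (Q k) e \<noteq> {} then (if cc < Mx (Q k) A e then 1 else 0) else 0))) (at_right cc)"
      unfolding ch
    proof (intro tendsto_sum tendsto_mult tendsto_const)
      fix k
      show "((\<lambda>s. if G (Q k) e \<noteq> {} \<and> s \<le> Mx (Q k) A e then 1 else 0 :: real) \<longlongrightarrow>
          (if G (Q k) e \<noteq> {} then (if cc < Mx (Q k) A e then 1 else 0) else 0)) (at_right cc)"
      proof (cases "G (Q k) e = {}")
        case True then show ?thesis by simp
      next
        case False then show ?thesis using downset_lim[of "Mx (Q k) A e" cc] by simp
      qed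
    qed
    have "Lim (at_right cc) (\<lambda>s. chi (\<lambda>y. (\<Sum>k\<in>K. c k * indicator (Q k) y) * indicator (H A s e) y)) =
       (\<Sum>k\<in>K. c k * (if G (Q k) e \<noteq> {} then (if cc < Mx (Q k) A e then 1 else 0) else 0))"
      by (rule tendsto_Lim[OF _ lim]) simp
    then show ?thesis unfolding ch
      by (simp add: sum_subtractf[symmetric] right_diff_distrib[symmetric]) (intro sum.cong refl, auto)
  qed
  show "g (\<lambda>y. \<Sum>k\<in>K. c k * indicator (Q k) y) m = (\<Sum>k\<in>K. c k * TT (Q k) m)"
    unfolding m g_def TT_def
    apply (simp only: prod.case trm)
    apply (simp add: sum_distrib_left)
    apply (subst sum.swap)
    apply (intro sum.cong refl)
    apply auto
    done
qed



lemma greedy_exists: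
  fixes z :: "'i set \<Rightarrow> real"
  assumes sm: "submodular z" and z0: "z {} = 0" and fT: "finite T"
  shows "\<exists>x. sum x T = z T \<and> (\<forall>A. A \<subseteq> T \<longrightarrow> sum x A \<le> z A)"
  using fT
proof (induction T rule: finite_induct)
  case empty
  show ?case by (intro exI[of _ "\<lambda>_. 0"]) (simp add: z0)
next
  case (insert v T)
  then obtain x where x: "sum x T = z T" "\<And>A. A \<subseteq> T \<Longrightarrow> sum x A \<le> z A" by blast
  define x' where "x' = x(v := z (insert v T) - z T)"
  have same: "sum x' A = sum x A" if "A \<subseteq> T" for A
    using that insert(2) unfolding x'_def by (intro sum.cong refl) auto
  have "sum x' (insert v T) = x' v + sum x' T" using insert(1,2) by simp
  also have "\<dots> = z (insert v T)" using same[of T] x(1) unfolding x'_def by simp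
  finally have s1: "sum x' (insert v T) = z (insert v T)" .
  have s2: "sum x' A \<le> z A" if A: "A \<subseteq> insert v T" for A
  proof (cases "v \<in> A")
    case False
    then have "A \<subseteq> T" using A by auto
    then show ?thesis using same x(2) by simp
  next
    case True
    define A' where "A' = A - {v}"
    have A'T: "A' \<subseteq> T" using A unfolding A'_def by auto
    have fA': "finite A'" using A'T insert(1) finite_subset by blast
    have AA': "A = insert v A'" "v \<notin> A'" using True unfolding A'_def by auto
    have "sum x' A = x' v + sum x' A'" using AA' fA' by simp
    also have "\<dots> = z (insert v T) - z T + sum x A'" using same[OF A'T] unfolding x'_def by simp
    also have "\<dots> \<le> z (insert v T) - z T + z A'" using x(2)[OF A'T] by simp
    also have "\<dots> \<le> z A"
    proof -
      have "A \<union> T = insert v T" "A \<inter> T = A'" using AA' A'T insert(2) by auto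
      moreover have "z (A \<union> T) + z (A \<inter> T) \<le> z A + z T" using sm unfolding submodular_def by blast
      ultimately show ?thesis by simp
    qed
    finally show ?thesis .
  qed
  show ?case using s1 s2 by blast
qed

lemma gp_nonempty:
  assumes "submodular z" "z {} = 0"
  shows "gen_perm_of (z :: 'i::finite set \<Rightarrow> real) \<noteq> {}"
proof -
  obtain x where "sum x UNIV = z UNIV" "\<And>A. sum x A \<le> z A"
    using greedy_exists[OF assms finite_class.finite_UNIV] by blast
  then have "x \<in> gen_perm_of z" unfolding gen_perm_of_def by simp
  then show ?thesis by blast
qed

lemma gp_closed: "closed (gen_perm_of (z :: 'i::finite set \<Rightarrow> real))"
proof -
  have "gen_perm_of z = {x. sum x UNIV = z UNIV} \<inter> {x. \<forall>A. sum x A \<le> z A}"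
    unfolding gen_perm_of_def by auto
  also have "closed \<dots>"
    by (intro closed_Int closed_Collect_eq closed_Collect_all closed_Collect_le cont_sum continuous_on_const)
  finally show ?thesis .
qed

lemma gp_bounded:
  fixes z :: "'i::finite set \<Rightarrow> real"
  defines "B \<equiv> \<bar>z UNIV\<bar> + (\<Sum>j\<in>UNIV. \<bar>z {j}\<bar>)"
  assumes x: "x \<in> gen_perm_of z"
  shows "x i \<in> {-B..B}"
proof -
  have le: "x j \<le> z {j}" for j
  proof -
    have "sum x {j} \<le> z {j}" using x unfolding gen_perm_of_def by blast
    then show ?thesis by simp
  qed
  have sabs: "\<bar>z {i}\<bar> \<le> (\<Sum>j\<in>UNIV. \<bar>z {j}\<bar>)"
    by (rule member_le_sum) auto
  have up: "x i \<le> B" using le[of i] sabs unfolding B_def by linarith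
  have "sum x UNIV = x i + sum x (UNIV - {i})" by (simp add: sum.remove)
  moreover have "sum x (UNIV - {i}) \<le> (\<Sum>j\<in>UNIV - {i}. \<bar>z {j}\<bar>)"
    by (rule sum_mono) (metis le abs_ge_self order_trans)
  moreover have "(\<Sum>j\<in>UNIV - {i}. \<bar>z {j}\<bar>) \<le> (\<Sum>j\<in>UNIV. \<bar>z {j}\<bar>)"
    by (rule sum_mono2) auto
  moreover have "sum x UNIV = z UNIV" using x unfolding gen_perm_of_def by simp
  ultimately have "- B \<le> x i" unfolding B_def by linarith
  then show ?thesis using up by simp
qed

lemma gp_compact: "compact (gen_perm_of (z :: 'i::finite set \<Rightarrow> real))"
proof -
  define B where "B = \<bar>z UNIV\<bar> + (\<Sum>j\<in>UNIV. \<bar>z {j}\<bar>)"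
  have box: "compact (PiE UNIV (\<lambda>_::'i. {-B..B}))"
  proof -
    have "compactin (product_topology (\<lambda>_::'i. euclidean) UNIV) (PiE UNIV (\<lambda>_::'i. {-B..B}))"
      by (simp add: compactin_PiE)
    then show ?thesis by (simp add: euclidean_product_topology)
  qed
  have sub: "gen_perm_of z \<subseteq> PiE UNIV (\<lambda>_::'i. {-B..B})"
    using gp_bounded[of _ z] unfolding B_def by (auto simp: PiE_iff)
  have "compact (PiE UNIV (\<lambda>_::'i. {-B..B}) \<inter> gen_perm_of z)"
    by (rule compact_Int_closed[OF box gp_closed])
  moreover have "PiE UNIV (\<lambda>_::'i. {-B..B}) \<inter> gen_perm_of z = gen_perm_of z" using sub by blast
  ultimately show ?thesis by simp
qed

lemma gp_pconvex: "pconvex (gen_perm_of (z :: 'i::finite set \<Rightarrow> real))"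
  unfolding pconvex_def
proof (intro ballI allI impI)
  fix y1 y2 :: "'i \<Rightarrow> real" and u :: real
  assume y1: "y1 \<in> gen_perm_of z" and y2: "y2 \<in> gen_perm_of z" and u: "0 \<le> u \<and> u \<le> 1"
  have "sum (\<lambda>j. (1-u) * y1 j + u * y2 j) A \<le> z A" for A
  proof -
    have "sum (\<lambda>j. (1-u) * y1 j + u * y2 j) A = (1-u) * sum y1 A + u * sum y2 A" by (rule pconvex_sum)
    also have "\<dots> \<le> (1-u) * z A + u * z A"
      using y1 y2 u unfolding gen_perm_of_def by (intro add_mono mult_left_mono) auto
    also have "\<dots> = z A" by (simp add: algebra_simps)
    finally show ?thesis .
  qed
  moreover have "sum (\<lambda>j. (1-u) * y1 j + u * y2 j) UNIV = z UNIV"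
  proof -
    have "sum (\<lambda>j. (1-u) * y1 j + u * y2 j) UNIV = (1-u) * sum y1 UNIV + u * sum y2 UNIV" by (rule pconvex_sum)
    also have "\<dots> = (1-u) * z UNIV + u * z UNIV" using y1 y2 unfolding gen_perm_of_def by simp
    also have "\<dots> = z UNIV" by (simp add: algebra_simps)
    finally show ?thesis .
  qed
  ultimately show "(\<lambda>j. (1-u) * y1 j + u * y2 j) \<in> gen_perm_of z" unfolding gen_perm_of_def by simp
qed

lemma is_gp_good: "is_gen_perm (P :: ('i::finite \<Rightarrow> real) set) \<Longrightarrow> compact P \<and> pconvex P"
  unfolding is_gen_perm_def using gp_compact gp_pconvex by blast

lemma TT_tutte:
  assumes "is_gen_perm (P :: ('i::finite \<Rightarrow> real) set)"
  shows "TT P = tutte_char P"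
proof
  fix m :: monom
  obtain a b c d where m: "m = (a, b, c, d)" by (cases m) auto
  obtain z where z: "submodular z" "z {} = 0" "P = gen_perm_of z" using assms unfolding is_gen_perm_def by blast
  have ne: "P \<noteq> {}" using gp_nonempty z by simp
  have sU: "\<And>x. x \<in> P \<Longrightarrow> sum x UNIV = z UNIV" using z(3) unfolding gen_perm_of_def by simp
  have muU: "mu P UNIV = z UNIV"
  proof -
    have "(\<lambda>x. sum x UNIV) ` P = {z UNIV}" using ne sU by auto
    then show ?thesis unfolding mu_def by simp
  qed
  have GP: "G P e = (if e = z UNIV then P else {})" for e
    unfolding G_def using sU by auto
  have "(if card A = a \<and> card (UNIV - A) = b \<and> G P (c + d) \<noteq> {} \<and> c = Mx P A (c + d) then 1 else 0) =
        R_monomial (card A) (card (UNIV - A)) (mu P A) (mu P UNIV - mu P A) (a, b, c, d)" for A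
  proof (cases "c + d = z UNIV")
    case True
    have "Mx P A (c + d) = mu P A" unfolding Mx_def mu_def GP using True by simp
    then show ?thesis unfolding R_monomial_def GP muU using True ne by auto
  next
    case False
    then show ?thesis unfolding R_monomial_def GP muU by auto
  qed
  then show "TT P m = tutte_char P m"
    unfolding m TT_def tutte_char_def by simp
qed

lemma indicator_rep: "indicator P = (\<lambda>y. \<Sum>k\<in>{0::nat}. 1 * indicator ((\<lambda>_. P) k) y :: real)"
  by simp

theorem theorem6p4:
  shows "strong_valuation (tutte_char :: ('i::finite \<Rightarrow> real) set \<Rightarrow> Ralg)"
  unfolding strong_valuation_def
proof (intro exI conjI allI impI)
  show "linear_on_span (g :: (('i \<Rightarrow> real) \<Rightarrow> real) \<Rightarrow> Ralg)"
    unfolding linear_on_span_def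
  proof (intro conjI ballI allI)
    fix u v :: "('i \<Rightarrow> real) \<Rightarrow> real"
    assume u: "u \<in> gp_indicator_span" and v: "v \<in> gp_indicator_span"
    obtain K1 :: "nat set" and c1 Q1 where r1: "finite K1" "\<forall>k\<in>K1. is_gen_perm (Q1 k)"
      "u = (\<lambda>x. \<Sum>k\<in>K1. c1 k * indicator (Q1 k) x)" using u unfolding gp_indicator_span_def by blast
    obtain K2 :: "nat set" and c2 Q2 where r2: "finite K2" "\<forall>k\<in>K2. is_gen_perm (Q2 k)"
      "v = (\<lambda>x. \<Sum>k\<in>K2. c2 k * indicator (Q2 k) x)" using v unfolding gp_indicator_span_def by blast
    define c' where "c' = case_sum c1 c2"
    define Q' where "Q' = case_sum Q1 Q2"
    have fK: "finite (K1 <+> K2)" using r1 r2 by simp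
    have gQ0: "\<forall>k\<in>K1 <+> K2. is_gen_perm (Q' k)"
      using r1(2) r2(2) unfolding Q'_def by auto
    have gQ: "\<And>k. k \<in> K1 <+> K2 \<Longrightarrow> compact (Q' k) \<and> pconvex (Q' k)"
      using gQ0 is_gp_good by blast
    have eq: "(\<lambda>x. u x + v x) = (\<lambda>x. \<Sum>k\<in>K1 <+> K2. c' k * indicator (Q' k) x)"
      unfolding r1(3) r2(3) c'_def Q'_def by (simp add: sum.Plus[OF r1(1) r2(1)] comp_def)
    have gu: "g u = (\<lambda>m. \<Sum>k\<in>K1. c1 k * TT (Q1 k) m)"
      unfolding r1(3) by (rule g_rep[OF r1(1)]) (use r1(2) is_gp_good in blast)
    have gv: "g v = (\<lambda>m. \<Sum>k\<in>K2. c2 k * TT (Q2 k) m)"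
      unfolding r2(3) by (rule g_rep[OF r2(1)]) (use r2(2) is_gp_good in blast)
    have "g (\<lambda>x. u x + v x) = g (\<lambda>x. \<Sum>k\<in>K1 <+> K2. c' k * indicator (Q' k) x)"
      by (simp only: eq)
    also have "\<dots> = (\<lambda>m. \<Sum>k\<in>K1 <+> K2. c' k * TT (Q' k) m)" by (rule g_rep[OF fK gQ])
    also have "\<dots> = (\<lambda>m. g u m + g v m)"
      unfolding gu gv by (simp add: sum.Plus[OF r1(1) r2(1)] comp_def c'_def Q'_def)
    finally show "g (\<lambda>x. u x + v x) = (\<lambda>m. g u m + g v m)" .
  next
    fix c :: real and u :: "('i \<Rightarrow> real) \<Rightarrow> real"
    assume u: "u \<in> gp_indicator_span"
    obtain K1 :: "nat set" and c1 Q1 where r1: "finite K1" "\<forall>k\<in>K1. is_gen_perm (Q1 k)"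
      "u = (\<lambda>x. \<Sum>k\<in>K1. c1 k * indicator (Q1 k) x)" using u unfolding gp_indicator_span_def by blast
    have gQ: "\<And>k. k \<in> K1 \<Longrightarrow> compact (Q1 k) \<and> pconvex (Q1 k)" using r1(2) is_gp_good by blast
    have eq: "(\<lambda>x. c * u x) = (\<lambda>x. \<Sum>k\<in>K1. (c * c1 k) * indicator (Q1 k) x)"
      unfolding r1(3) by (simp add: sum_distrib_left mult.assoc)
    have gu: "g u = (\<lambda>m. \<Sum>k\<in>K1. c1 k * TT (Q1 k) m)"
      unfolding r1(3) by (rule g_rep[OF r1(1) gQ])
    have "g (\<lambda>x. c * u x) = g (\<lambda>x. \<Sum>k\<in>K1. (c * c1 k) * indicator (Q1 k) x)"
      by (simp only: eq)
    also have "\<dots> = (\<lambda>m. \<Sum>k\<in>K1. (c * c1 k) * TT (Q1 k) m)" by (rule g_rep[OF r1(1) gQ])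
    also have "\<dots> = (\<lambda>m. c * g u m)" unfolding gu by (simp add: sum_distrib_left mult.assoc)
    finally show "g (\<lambda>x. c * u x) = (\<lambda>m. c * g u m)" .
  qed
next
  fix P :: "('i \<Rightarrow> real) set"
  assume P: "is_gen_perm P"
  have "g (indicator P) = (\<lambda>m. \<Sum>k\<in>{0::nat}. 1 * TT ((\<lambda>_. P) k) m)"
    by (subst indicator_rep, rule g_rep) (use is_gp_good[OF P] in auto)
  then show "tutte_char P = g (indicator P)" using TT_tutte[OF P] by simp
qed

end
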